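(* Let $\{\mu_t\}_{t\in[0,T]}$ be the limit family from the definition of approximative solutions below, with $\rho_t$ its $x$-marginal and $M$ the uniform velocity bound. Then $\{\mu_t\}$ is locally mass preserving: for every set $C\subset\mathbb{R}^d$ and all $0\le t_0\le t\le T$, $$\rho_t\big(\overline{C}+(t-t_0)\overline{B(M)}\big)\ge\rho_{t_0}(C).$$
   Context: Setting: $T>0$, $\alpha\in[1,2]$, $d\ge1$, $\psi(s)=s^{-\alpha}$; $\overline{S}$ denotes closure and $+$ the Minkowski sum. Particle system: $\dot x_i=v_i$, $\dot v_i=\frac1N\sum_{j\ne i}\psi(|x_i-x_j|)(v_j-v_i)$ (unique smooth non-collisional global solutions for distinct initial positions). Atomic solution: $\mu^N_t=\frac1N\sum_i\delta_{x_i^N(t)}\otimes\delta_{v_i^N(t)}$, $\mu^N=\mu^N_t\otimes\lambda^1(t)$, where $\mu=\mu_t\otimes\lambda^1(t)$ means $\int g\,d\mu=\int_0^T\int g(t,\cdot)d\mu_t\,dt$. $E[\mu_t]=\int|v|^2d\mu_t$. Approximative solutions: given compactly supported $\rho_0\in\mathcal{P}(\mathbb{R}^d)$ and $u_0\in L^\infty(\rho_0;\mathbb{R}^d)$, for each $N$ take initial data $(x_{i0}^N,v_{i0}^N)_{i=1}^N$ with pairwise distinct $x_{i0}^N$ such that $\frac1N\sum_i\delta_{x_{i0}^N}\rightharpoonup\rho_0$ and $\frac1N\sum_iv_{i0}^N\delta_{x_{i0}^N}\rightharpoonup u_0\rho_0$ narrowly, with all $\mu^N_t$ supported in $(T+1)B(M)\times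 B(M)$ for a fixed $M$ (so $|v_i^N(t)|<M$); let $\mu^N$ be the associated atomic solutions, and pass to a subsequence (not relabeled) such that: $\mu^N\rightharpoonup\mu=\mu_t\otimes\lambda^1(t)$ narrowly; $[\mu^N_t\otimes\mu^N_t]\otimes\lambda^1(t)\rightharpoonup[\mu_t\otimes\mu_t]\otimes\lambda^1(t)$ narrowly; $\rho^N_t:=\int_{\mathbb{R}^d_v}d\mu^N_t\to\rho_t$ in $C([0,T];(\mathcal{M}_+(\mathbb{R}^d),d_{BL}))$, where $\rho_t$ is the $x$-marginal of $\mu_t$; and $E[\mu^N_t]\to E[\mu_t]$ for all $t$ in a full-measure set $A_E$. $B(r)$ is the open ball of radius $r$ at $0$ and $d_{BL}$ the bounded-Lipschitz distance. *)

theory Defs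
  imports "HOL-Probability.Probability"
begin

text \<open>Communication weight psi(s) = s^(-alpha).\<close>
definition psi :: "real \<Rightarrow> real \<Rightarrow> real" where
  "psi \<alpha> s = s powr (- \<alpha>)"

text \<open>(x,v) is the (unique, smooth, non-collisional) solution of the N-particle
  Cucker--Smale system on [0,T]: particles indexed by i < N.\<close>
definition particle_sol ::
  "real \<Rightarrow> real \<Rightarrow> nat \<Rightarrow> (nat \<Rightarrow> real \<Rightarrow> 'a::euclidean_space) \<Rightarrow> (nat \<Rightarrow> real \<Rightarrow> 'a) \<Rightarrow> bool" where
  "particle_sol \<alpha> T N x v \<longleftrightarrow>
     (\<forall>t\<in>{0..T}.
        (\<forall>i<N. \<forall>j<N. i \<noteq> j \<longrightarrow> x i t \<noteq> x j t) \<and>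
        (\<forall>i<N. (x i has_vector_derivative v i t) (at t within {0..T}) \<and>
               (v i has_vector_derivative
                  ((1 / real N) *\<^sub>R (\<Sum>j\<in>{..<N} - {i}. psi \<alpha> (norm (x i t - x j t)) *\<^sub>R (v j t - v i t))))
                 (at t within {0..T})))"

text \<open>Bounded continuous test functions (narrow convergence).\<close>
definition bcont :: "('b::topological_space \<Rightarrow> real) \<Rightarrow> bool" where
  "bcont g \<longleftrightarrow> continuous_on UNIV g \<and> bounded (range g)"

text \<open>Test functions in the unit ball of the bounded-Lipschitz norm (defining d_BL).\<close>
definition BL1 :: "('b::metric_space \<Rightarrow> real) \<Rightarrow> bool" where
  "BL1 f \<longleftrightarrow> (\<forall>y. \<bar>f y\<bar> \<le> 1) \<and> (\<forall>y z. \<bar>f y - f z\<bar> \<le> dist y z)"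

text \<open>x-marginal of a measure on R^d x R^d.\<close>
definition xmarg :: "('a::euclidean_space \<times> 'a) measure \<Rightarrow> 'a measure" where
  "xmarg m = distr m borel fst"

text \<open>Kinetic energy E[mu_t].\<close>
definition energy :: "('a::euclidean_space \<times> 'a) measure \<Rightarrow> real" where
  "energy m = integral\<^sup>L m (\<lambda>z. (norm (snd z))\<^sup>2)"

end

theory Submission
  imports Defs
begin


lemma empir_le:
  fixes F G :: "'a::euclidean_space set"
  assumes F: "closed F" "F \<noteq> {}" and mv: "\<And>z. z \<in> F \<Longrightarrow> z + (y - y0) \<in> G"
  shows "infdist y G \<le> infdist y0 F"
proof -
  obtain z where z: "z \<in> F" "infdist y0 F = dist y0 z" using infdist_attains_inf[OF F] by blast
  have "infdist y G \<le> dist y (z + (y - y0))" by (rule infdist_le[OF mv[OF z(1)]])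
  also have "\<dots> = dist y0 z" by (simp add: dist_norm algebra_simps)
  finally show ?thesis using z by simp
qed

lemma hBL1:
  fixes A :: "'a::euclidean_space set"
  assumes "0 < e" "e \<le> 1"
  shows "BL1 (\<lambda>y. max 0 (e - infdist y A))"
  unfolding BL1_def
proof safe
  fix y show "\<bar>max 0 (e - infdist y A)\<bar> \<le> 1" using assms infdist_nonneg[of y A] by auto
next
  fix y z show "\<bar>max 0 (e - infdist y A) - max 0 (e - infdist z A)\<bar> \<le> dist y z"
    using infdist_triangle_abs[of y A z] by (auto simp: abs_if split: if_splits)
qed

lemma h_integrable:
  fixes A :: "'a::euclidean_space set" and m :: "'a measure"
  assumes "finite_measure m" "sets m = sets borel" "0 < e"
  shows "integrable m (\<lambda>y. max 0 (e - infdist y A))"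
proof -
  have meas: "(\<lambda>y. max 0 (e - infdist y A)) \<in> borel_measurable m"
    using assms(2) by (simp add: measurable_cong_sets[OF assms(2) refl] borel_measurable_continuous_onI continuous_intros)
  show ?thesis
    apply (rule finite_measure.integrable_const_bound[OF assms(1), where B=e])
    using infdist_nonneg assms(3) meas by auto
qed

lemma core:
  fixes \<rho> :: "real \<Rightarrow> 'a::euclidean_space measure" and X :: "nat \<Rightarrow> nat \<Rightarrow> real \<Rightarrow> 'a"
    and N :: "nat \<Rightarrow> nat"
  assumes fin: "finite_measure (\<rho> t0)" "finite_measure (\<rho> t)"
    and sets: "sets (\<rho> t0) = sets borel" "sets (\<rho> t) = sets borel"
    and conv: "\<And>\<epsilon>. \<epsilon> > 0 \<Longrightarrow> \<forall>\<^sub>F k in sequentially. \<forall>f::'a \<Rightarrow> real. BL1 f \<longrightarrow>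
        \<bar>(1 / real (N k)) * (\<Sum>i<N k. f (X k i t0)) - integral\<^sup>L (\<rho> t0) f\<bar> \<le> \<epsilon> \<and>
        \<bar>(1 / real (N k)) * (\<Sum>i<N k. f (X k i t)) - integral\<^sup>L (\<rho> t) f\<bar> \<le> \<epsilon>"
    and Npos: "N k0 > 0"
    and F: "closed F" "F \<noteq> {}" and G: "closed G"
    and mv: "\<And>z k i. z \<in> F \<Longrightarrow> i < N k \<Longrightarrow> z + (X k i t - X k i t0) \<in> G"
  shows "measure (\<rho> t0) F \<le> measure (\<rho> t) G"
proof -
  have Gne: "G \<noteq> {}"
  proof -
    obtain z where "z \<in> F" using F by blast
    show ?thesis using mv[OF \<open>z\<in>F\<close> Npos] by auto
  qed
  have sp: "space (\<rho> t0) = UNIV" "space (\<rho> t) = UNIV"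
    using sets_eq_imp_space_eq[OF sets(1)] sets_eq_imp_space_eq[OF sets(2)] by auto
  define h where "h A e y = max 0 (e - infdist y A)" for A :: "'a set" and e y
  have stepA: "integral\<^sup>L (\<rho> t0) (h F e) \<le> integral\<^sup>L (\<rho> t) (h G e)" if e: "0 < e" "e \<le> 1" for e
  proof (rule field_le_epsilon)
    fix d :: real assume d: "0 < d"
    from conv[of "d/2"] d obtain k where
      k: "\<forall>f::'a \<Rightarrow> real. BL1 f \<longrightarrow>
        \<bar>(1 / real (N k)) * (\<Sum>i<N k. f (X k i t0)) - integral\<^sup>L (\<rho> t0) f\<bar> \<le> d/2 \<and>
        \<bar>(1 / real (N k)) * (\<Sum>i<N k. f (X k i t)) - integral\<^sup>L (\<rho> t) f\<bar> \<le> d/2"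
      by (auto simp: eventually_sequentially)
    have b1: "BL1 (h F e)" "BL1 (h G e)" using hBL1[OF e] unfolding h_def by auto
    have "(\<Sum>i<N k. h F e (X k i t0)) \<le> (\<Sum>i<N k. h G e (X k i t))"
    proof (rule sum_mono)
      fix i assume "i \<in> {..<N k}"
      then have "infdist (X k i t) G \<le> infdist (X k i t0) F"
        using empir_le[OF F, of "X k i t" "X k i t0" G] mv by auto
      then show "h F e (X k i t0) \<le> h G e (X k i t)" unfolding h_def by auto
    qed
    then have "(1 / real (N k)) * (\<Sum>i<N k. h F e (X k i t0)) \<le> (1 / real (N k)) * (\<Sum>i<N k. h G e (X k i t))"
      by (rule mult_left_mono) auto
    then show "integral\<^sup>L (\<rho> t0) (h F e) \<le> integral\<^sup>L (\<rho> t) (h G e) + d"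
      using k[rule_format, OF b1(1)] k[rule_format, OF b1(2)] by linarith
  qed
  have stepB: "e * measure (\<rho> t0) F \<le> integral\<^sup>L (\<rho> t0) (h F e)" if e: "0 < e" for e
  proof -
    have "F \<in> sets (\<rho> t0)" using sets F by simp
    then have "e * measure (\<rho> t0) F = integral\<^sup>L (\<rho> t0) (\<lambda>y. e * indicator F y)"
      using sp by (simp add: Int_absorb2)
    also have "\<dots> \<le> integral\<^sup>L (\<rho> t0) (h F e)"
      apply (rule integral_mono)
      subgoal using \<open>F \<in> sets (\<rho> t0)\<close> finite_measure.emeasure_finite[OF fin(1)]
        by (intro integrable_mult_right integrable_real_indicator) (auto simp: top.not_eq_extremum[symmetric])
      subgoal using h_integrable[OF fin(1) sets(1) e, of F] unfolding h_def .
      subgoal using e by (auto simp: h_def indicator_def infdist_nonneg)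
      done
    finally show ?thesis .
  qed
  define Ge where "Ge e = {y. infdist y G < e}" for e
  have Ge_sets: "Ge e \<in> sets (\<rho> t)" for e
  proof -
    have "open (Ge e)" unfolding Ge_def
      by (rule open_Collect_less) (auto intro: continuous_intros)
    then show ?thesis using sets by simp
  qed
  have stepC: "integral\<^sup>L (\<rho> t) (h G e) \<le> e * measure (\<rho> t) (Ge e)" if e: "0 < e" for e
  proof -
    have "integral\<^sup>L (\<rho> t) (h G e) \<le> integral\<^sup>L (\<rho> t) (\<lambda>y. e * indicator (Ge e) y)"
      apply (rule integral_mono)
      subgoal using h_integrable[OF fin(2) sets(2) e, of G] unfolding h_def .
      subgoal using Ge_sets finite_measure.emeasure_finite[OF fin(2)]
        by (intro integrable_mult_right integrable_real_indicator) (auto simp: top.not_eq_extremum[symmetric])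
      subgoal using e by (auto simp: h_def indicator_def infdist_nonneg Ge_def)
      done
    also have "\<dots> = e * measure (\<rho> t) (Ge e)"
      using sp by (simp add: Int_absorb2)
    finally show ?thesis .
  qed
  have le: "measure (\<rho> t0) F \<le> measure (\<rho> t) (Ge (1 / (real n + 1)))" for n
  proof -
    define e where "e = 1 / (real n + 1)"
    have e: "0 < e" "e \<le> 1" unfolding e_def by (auto simp: field_simps)
    have "e * measure (\<rho> t0) F \<le> e * measure (\<rho> t) (Ge e)"
      using stepA[OF e] stepB[OF e(1)] stepC[OF e(1)] by linarith
    then have "measure (\<rho> t0) F \<le> measure (\<rho> t) (Ge e)" using e by (simp add: mult_le_cancel_left_pos)
    then show ?thesis unfolding e_def .
  qed
  have lim: "(\<lambda>n. measure (\<rho> t) (Ge (1 / (real n + 1)))) \<longlonglongrightarrow> measure (\<rho> t) (\<Inter>n. Ge (1 / (real n + 1)))"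
  proof (rule finite_measure.finite_Lim_measure_decseq[OF fin(2)])
    show "range (\<lambda>n. Ge (1 / (real n + 1))) \<subseteq> sets (\<rho> t)" using Ge_sets by auto
    show "decseq (\<lambda>n. Ge (1 / (real n + 1)))"
      unfolding decseq_def Ge_def
      by (auto simp: frac_le) (smt (verit) frac_le of_nat_0_le_iff of_nat_mono)
  qed
  have inter: "(\<Inter>n. Ge (1 / (real n + 1))) = G"
  proof safe
    fix y assume y: "y \<in> (\<Inter>n. Ge (1 / (real n + 1)))"
    have "infdist y G \<le> 0"
    proof (rule ccontr)
      assume "\<not> infdist y G \<le> 0"
      then obtain n where "1 / (real n + 1) < infdist y G"
        using nat_approx_posE by (metis add.commute linorder_not_le of_nat_Suc)
      moreover have "infdist y G < 1 / (real n + 1)" using y by (auto simp: Ge_def)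
      ultimately show False by linarith
    qed
    then have "infdist y G = 0" using infdist_nonneg[of y G] by linarith
    then show "y \<in> G" using in_closed_iff_infdist_zero[OF G Gne] by simp
  next
    fix y n assume "y \<in> G" then show "y \<in> Ge (1 / (real n + 1))" by (simp add: Ge_def)
  qed
  show ?thesis
    using LIMSEQ_le_const[OF lim] le inter by auto
qed


theorem mainTheorem10:
  fixes T \<alpha> M :: real
    and \<rho>0 :: "'a::euclidean_space measure" and u0 :: "'a \<Rightarrow> 'a"
    and N :: "nat \<Rightarrow> nat"
    and x v :: "nat \<Rightarrow> nat \<Rightarrow> real \<Rightarrow> 'a"
    and \<mu> :: "real \<Rightarrow> ('a \<times> 'a) measure"
  assumes T_pos: "T > 0"
    and alpha: "1 \<le> \<alpha>" "\<alpha> \<le> 2"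
    \<comment> \<open>initial data rho_0, u_0\<close>
    and rho0_prob: "prob_space \<rho>0" and rho0_sets: "sets \<rho>0 = sets borel"
    and rho0_cpt: "\<exists>K. compact K \<and> emeasure \<rho>0 (UNIV - K) = 0"
    and u0_meas: "u0 \<in> borel_measurable borel"
    and u0_Linf: "\<exists>C. AE y in \<rho>0. norm (u0 y) \<le> C"
    \<comment> \<open>the (sub)sequence of particle systems, N k particles\<close>
    and N_mono: "strict_mono N"
    and sol: "\<And>k. particle_sol \<alpha> T (N k) (x k) (v k)"
    and init_rho: "\<And>g::'a \<Rightarrow> real. bcont g \<Longrightarrow>
        (\<lambda>k. (1 / real (N k)) * (\<Sum>i<N k. g (x k i 0))) \<longlonglongrightarrow> integral\<^sup>L \<rho>0 g"
    and init_mom: "\<And>g::'a \<Rightarrow> real. bcont g \<Longrightarrow>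
        (\<lambda>k. (1 / real (N k)) *\<^sub>R (\<Sum>i<N k. g (x k i 0) *\<^sub>R v k i 0))
          \<longlonglongrightarrow> integral\<^sup>L \<rho>0 (\<lambda>y. g y *\<^sub>R u0 y)"
    and supp: "\<And>k i t. i < N k \<Longrightarrow> t \<in> {0..T} \<Longrightarrow>
        norm (x k i t) < (T + 1) * M \<and> norm (v k i t) < M"
    \<comment> \<open>the limit family mu_t\<close>
    and mu_meas: "\<And>t. t \<in> {0..T} \<Longrightarrow> finite_measure (\<mu> t) \<and> sets (\<mu> t) = sets borel"
    and conv_mu: "\<And>g::real \<times> ('a \<times> 'a) \<Rightarrow> real. bcont g \<Longrightarrow>
        (\<lambda>k. LINT t:{0..T}|lborel. (1 / real (N k)) * (\<Sum>i<N k. g (t, (x k i t, v k i t))))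
          \<longlonglongrightarrow> (LINT t:{0..T}|lborel. integral\<^sup>L (\<mu> t) (\<lambda>z. g (t, z)))"
    and conv_mu2: "\<And>g::real \<times> (('a \<times> 'a) \<times> ('a \<times> 'a)) \<Rightarrow> real. bcont g \<Longrightarrow>
        (\<lambda>k. LINT t:{0..T}|lborel. (1 / real (N k))\<^sup>2 *
              (\<Sum>i<N k. \<Sum>j<N k. g (t, ((x k i t, v k i t), (x k j t, v k j t)))))
          \<longlonglongrightarrow> (LINT t:{0..T}|lborel. integral\<^sup>L (\<mu> t \<Otimes>\<^sub>M \<mu> t) (\<lambda>p. g (t, p)))"
    and conv_rho: "\<And>\<epsilon>. \<epsilon> > 0 \<Longrightarrow> \<forall>\<^sub>F k in sequentially. \<forall>t\<in>{0..T}. \<forall>f::'a \<Rightarrow> real. BL1 f \<longrightarrow>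
        \<bar>(1 / real (N k)) * (\<Sum>i<N k. f (x k i t)) - integral\<^sup>L (xmarg (\<mu> t)) f\<bar> \<le> \<epsilon>"
    and conv_energy: "\<exists>A. A \<subseteq> {0..T} \<and> {0..T} - A \<in> null_sets lborel \<and>
        (\<forall>t\<in>A. (\<lambda>k. (1 / real (N k)) * (\<Sum>i<N k. (norm (v k i t))\<^sup>2)) \<longlonglongrightarrow> energy (\<mu> t))"
  shows "\<forall>C t0 t. 0 \<le> t0 \<longrightarrow> t0 \<le> t \<longrightarrow> t \<le> T \<longrightarrow>
           measure (xmarg (\<mu> t)) {c + (t - t0) *\<^sub>R b | c b. c \<in> closure C \<and> b \<in> closure (ball 0 M)}
             \<ge> measure (xmarg (\<mu> t0)) C"
  proof (intro allI impI)
  fix C :: "'a set" and t0 t :: real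
  assume tt: "0 \<le> t0" "t0 \<le> t" "t \<le> T"
  define \<rho> where "\<rho> s = xmarg (\<mu> s)" for s
  have N1: "N 1 > 0" using N_mono unfolding strict_mono_def by (metis less_nat_zero_code neq0_conv zero_less_one)
  have Mpos: "M > 0"
  proof -
    have "norm (v 1 0 0) < M" using supp[OF N1, of 0] T_pos by auto
    then show ?thesis using norm_ge_zero[of "v 1 0 0"] by linarith
  qed
  have fstm: "fst \<in> measurable (\<mu> s) borel" if "s \<in> {0..T}" for s
  proof -
    have "fst \<in> borel_measurable (borel::('a\<times>'a) measure)"
      by (rule borel_measurable_continuous_onI) (intro continuous_intros)
    then show ?thesis by (subst measurable_cong_sets[OF conjunct2[OF mu_meas[OF that]] refl])
  qed
  have fin: "finite_measure (\<rho> s)" "sets (\<rho> s) = sets borel" if "s \<in> {0..T}" for s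
    subgoal using finite_measure.finite_measure_distr[OF conjunct1[OF mu_meas[OF that]] fstm[OF that]]
      unfolding \<rho>_def xmarg_def .
    subgoal unfolding \<rho>_def xmarg_def by (rule sets_distr)
    done
  have t0T: "t0 \<in> {0..T}" and tT: "t \<in> {0..T}" using tt by auto
  define G where "G = {c + (t - t0) *\<^sub>R b | c b. c \<in> closure C \<and> b \<in> closure (ball 0 M)}"
  have main: "measure (\<rho> t0) C \<le> measure (\<rho> t) G"
  proof (cases "C \<in> sets borel \<and> C \<noteq> {}")
    case False
    have "measure (\<rho> t0) C = 0"
    proof (cases "C = {}")
      case True then show ?thesis by simp
    next
      case False
      then have "C \<notin> sets (\<rho> t0)" using \<open>\<not> (C \<in> sets borel \<and> C \<noteq> {})\<close> fin(2)[OF t0T] by simp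
      then show ?thesis by (rule measure_notin_sets)
    qed
    then show ?thesis by simp
  next
    case True
    have "measure (\<rho> t0) C \<le> measure (\<rho> t0) (closure C)"
      apply (rule finite_measure.finite_measure_mono[OF fin(1)[OF t0T]])
      using True fin(2)[OF t0T] closure_subset by auto
    also have "measure (\<rho> t0) (closure C) \<le> measure (\<rho> t) G"
    proof (rule core[where X=x and N=N])
      show "finite_measure (\<rho> t0)" "finite_measure (\<rho> t)" "sets (\<rho> t0) = sets borel" "sets (\<rho> t) = sets borel"
        using fin t0T tT by auto
      show "N 1 > 0" by (rule N1)
      show "closed (closure C)" "closure C \<noteq> {}" using True by auto
      fix \<epsilon> :: real assume "\<epsilon> > 0"
      from conv_rho[OF this] show "\<forall>\<^sub>F k in sequentially. \<forall>f::'a \<Rightarrow> real. BL1 f \<longrightarrow>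
        \<bar>(1 / real (N k)) * (\<Sum>i<N k. f (x k i t0)) - integral\<^sup>L (\<rho> t0) f\<bar> \<le> \<epsilon> \<and>
        \<bar>(1 / real (N k)) * (\<Sum>i<N k. f (x k i t)) - integral\<^sup>L (\<rho> t) f\<bar> \<le> \<epsilon>"
        by (rule eventually_mono) (use t0T tT in \<open>auto simp: \<rho>_def\<close>)
    next
      have cb: "closure (ball (0::'a) M) = cball 0 M" using Mpos by simp
      have "G = (\<Union>c\<in>closure C. \<Union>d\<in>(\<lambda>b. (t - t0) *\<^sub>R b) ` cball 0 M. {c + d})"
        unfolding G_def cb by blast
      moreover have "compact ((\<lambda>b. (t - t0) *\<^sub>R b) ` cball (0::'a) M)"
        by (intro compact_continuous_image continuous_intros compact_cball)
      ultimately show "closed G" using closed_compact_sums[of "closure C"] by (metis closed_closure)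
    next
      fix z k i assume z: "z \<in> closure C" and i: "i < N k"
      have bound: "norm (x k i t - x k i t0) \<le> M * norm (t - t0)"
      proof (rule differentiable_bound[where S="{0..T}" and f'="\<lambda>s h. h *\<^sub>R v k i s"])
        show "convex {0..T}" by simp
        fix s assume s: "s \<in> {0..T}"
        from sol[of k] s i show "(x k i has_derivative (\<lambda>h. h *\<^sub>R v k i s)) (at s within {0..T})"
          unfolding particle_sol_def has_vector_derivative_def by blast
        show "onorm (\<lambda>h. h *\<^sub>R v k i s) \<le> M"
        proof (rule onorm_bound)
          show "0 \<le> M" using Mpos by simp
          fix h :: real
          have "norm (v k i s) \<le> M" using supp[OF i s] by simp
          then show "norm (h *\<^sub>R v k i s) \<le> M * norm h"
            using mult_right_mono[of "norm (v k i s)" M "\<bar>h\<bar>"] by (simp add: mult.commute)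
        qed
      qed (use tT t0T in auto)
      define b where "b = (if t = t0 then 0 else (1 / (t - t0)) *\<^sub>R (x k i t - x k i t0))"
      have nb: "norm b \<le> M"
      proof (cases "t = t0")
        case False
        then have pos: "t - t0 > 0" using tt by auto
        have "norm b = norm (x k i t - x k i t0) / (t - t0)" using False pos by (simp add: b_def)
        also have "\<dots> \<le> M" using bound pos by (simp add: divide_le_eq)
        finally show ?thesis .
      qed (use Mpos b_def in auto)
      have eq: "x k i t - x k i t0 = (t - t0) *\<^sub>R b"
      proof (cases "t = t0")
        case False then show ?thesis by (simp add: b_def)
      next
        case True then show ?thesis by (simp add: b_def)
      qed
      have bin: "b \<in> closure (ball 0 M)" using nb Mpos by simp
      show "z + (x k i t - x k i t0) \<in> G"
        unfolding G_def eq using z bin by blast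
    qed
    finally show ?thesis .
  qed
  then show "measure (xmarg (\<mu> t)) {c + (t - t0) *\<^sub>R b | c b. c \<in> closure C \<and> b \<in> closure (ball 0 M)}
             \<ge> measure (xmarg (\<mu> t0)) C" unfolding \<rho>_def G_def .
qed

end
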